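(* For every integer $n\geq 3$ and every $m\in\{3,6,9,\dots,3n-6\}$ there exists a planar graph $G$ with $n$ vertices and $m$ edges such that $c(G)=n+\frac{7}{3}m-2$.
   Context: All graphs are finite, simple and undirected. A clique of a graph $G$ is a (possibly empty) set of pairwise adjacent vertices; $c(G)$ denotes the number of cliques of $G$ (including the empty clique, all single vertices and all edges). *)

theory Defs
  imports "HOL-Analysis.Analysis"
begin

definition simple_graph :: "'a set \<Rightarrow> 'a set set \<Rightarrow> bool" where
  "simple_graph V E \<longleftrightarrow> finite V \<and>
     (\<forall>e\<in>E. \<exists>u v. u \<in> V \<and> v \<in> V \<and> u \<noteq> v \<and> e = {u, v})"

text \<open>Cliques: (possibly empty) sets of pairwise adjacent vertices.\<close>

definition cliques :: "'a set \<Rightarrow> 'a set set \<Rightarrow> 'a set set" where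
  "cliques V E = {C. C \<subseteq> V \<and> (\<forall>u\<in>C. \<forall>v\<in>C. u \<noteq> v \<longrightarrow> {u, v} \<in> E)}"

definition num_cliques :: "'a set \<Rightarrow> 'a set set \<Rightarrow> nat" where
  "num_cliques V E = card (cliques V E)"

definition planar_graph :: "'a set \<Rightarrow> 'a set set \<Rightarrow> bool" where
  "planar_graph V E \<longleftrightarrow>
     (\<exists>(pos :: 'a \<Rightarrow> complex) (\<gamma> :: 'a set \<Rightarrow> real \<Rightarrow> complex).
        inj_on pos V \<and>
        (\<forall>e\<in>E. arc (\<gamma> e) \<and> {pathstart (\<gamma> e), pathfinish (\<gamma> e)} = pos ` e \<and>
                 path_image (\<gamma> e) \<inter> pos ` V = pos ` e) \<and>
        (\<forall>e\<in>E. \<forall>e'\<in>E. e \<noteq> e' \<longrightarrow>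
                 path_image (\<gamma> e) \<inter> path_image (\<gamma> e') \<subseteq> pos ` (e \<inter> e')))"

end

theory Submission
  imports Defs
begin


lemma cliques_add:
  assumes v: "v \<notin> V" and EV: "\<forall>e\<in>E. e \<subseteq> V" and K: "K \<in> cliques V E" and fin: "finite V"
  shows "card (cliques (insert v V) (E \<union> (\<lambda>u. {v,u}) ` K)) = card (cliques V E) + 2 ^ card K"
proof -
  let ?E = "E \<union> (\<lambda>u. {v,u}) ` K"
  have KV: "K \<subseteq> V" using K by (simp add: cliques_def)
  have eq: "cliques (insert v V) ?E = cliques V E \<union> (insert v) ` Pow K"
  proof (rule set_eqI, rule iffI)
    fix C assume C: "C \<in> cliques (insert v V) ?E"
    show "C \<in> cliques V E \<union> (insert v) ` Pow K"
    proof (cases "v \<in> C")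
      case False
      have "C \<subseteq> V" using C False by (auto simp: cliques_def)
      moreover have "\<forall>u\<in>C. \<forall>w\<in>C. u \<noteq> w \<longrightarrow> {u, w} \<in> E"
      proof (intro ballI impI)
        fix u w assume "u \<in> C" "w \<in> C" "u \<noteq> w"
        then have "{u,w} \<in> ?E" using C by (auto simp: cliques_def)
        moreover have "{u,w} \<notin> (\<lambda>u. {v,u}) ` K" using False \<open>u \<in> C\<close> \<open>w \<in> C\<close> by auto
        ultimately show "{u,w} \<in> E" by blast
      qed
      ultimately show ?thesis by (simp add: cliques_def)
    next
      case True
      have "C - {v} \<subseteq> K"
      proof
        fix u assume u: "u \<in> C - {v}"
        then have "{v,u} \<in> ?E" using C True by (auto simp: cliques_def)
        moreover have "{v,u} \<notin> E" using EV v by auto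
        ultimately obtain x where "x \<in> K" "{v,u} = {v,x}" by auto
        then show "u \<in> K" using u by (auto simp: doubleton_eq_iff)
      qed
      then have "C \<in> (insert v) ` Pow K" using True by (auto intro!: image_eqI[where x="C - {v}"])
      then show ?thesis by blast
    qed
  next
    fix C assume "C \<in> cliques V E \<union> (insert v) ` Pow K"
    then show "C \<in> cliques (insert v V) ?E"
    proof
      assume "C \<in> cliques V E" then show ?thesis by (auto simp: cliques_def)
    next
      assume "C \<in> (insert v) ` Pow K"
      then obtain S where S: "S \<subseteq> K" "C = insert v S" by auto
      show ?thesis unfolding cliques_def
      proof (intro CollectI conjI ballI impI)
        show "C \<subseteq> insert v V" using S KV by auto
      next
        fix u w assume "u \<in> C" "w \<in> C" "u \<noteq> w"
        moreover have "\<forall>u\<in>K. \<forall>w\<in>K. u \<noteq> w \<longrightarrow> {u, w} \<in> E" using K by (simp add: cliques_def)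
        ultimately show "{u,w} \<in> ?E" using S \<open>u \<in> C\<close> \<open>w \<in> C\<close> \<open>u \<noteq> w\<close>
          by (cases "u = v"; cases "w = v") (auto simp: insert_commute)
      qed
    qed
  qed
  have fc: "finite (cliques V E)" using fin by (auto simp: cliques_def intro: finite_subset[of _ "Pow V"])
  have finK: "finite K" using KV fin finite_subset by auto
  have disj: "cliques V E \<inter> (insert v) ` Pow K = {}"
  proof (rule ccontr)
    assume "cliques V E \<inter> (insert v) ` Pow K \<noteq> {}"
    then obtain C where "C \<in> cliques V E" "C \<in> (insert v) ` Pow K" by blast
    then have "C \<subseteq> V" "v \<in> C" by (auto simp: cliques_def)
    then show False using v by blast
  qed
  have inj: "inj_on (insert v) (Pow K)"
  proof (rule inj_onI)
    fix A B assume "A \<in> Pow K" "B \<in> Pow K" "insert v A = insert v B"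
    moreover have "v \<notin> A" "v \<notin> B" using \<open>A \<in> Pow K\<close> \<open>B \<in> Pow K\<close> KV v by auto
    ultimately show "A = B" by (metis Diff_insert_absorb)
  qed
  have "card (cliques (insert v V) ?E) = card (cliques V E) + card ((insert v) ` Pow K)"
    unfolding eq using fc finK disj by (simp add: card_Un_disjoint)
  also have "card ((insert v) ` Pow K) = 2 ^ card K" using inj finK by (simp add: card_image card_Pow)
  finally show ?thesis .
qed

lemma edges_add:
  assumes v: "v \<notin> V" and EV: "\<forall>e\<in>E. e \<subseteq> V" and KV: "K \<subseteq> V" and fin: "finite V" and fE: "finite E"
  shows "card (E \<union> (\<lambda>u. {v,u}) ` K) = card E + card K"
proof -
  have finK: "finite K" using KV fin finite_subset by auto
  have disj: "E \<inter> (\<lambda>u. {v,u}) ` K = {}" using v EV by auto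
  have inj: "inj_on (\<lambda>u. {v,u}) K" using v KV unfolding inj_on_def by (auto simp: doubleton_eq_iff)
  show ?thesis using disj inj finK fE by (simp add: card_Un_disjoint card_image)
qed



definition Eg :: "nat \<Rightarrow> nat set set" where
  "Eg r = {{0,1}} \<union> (\<lambda>j. {0,j}) ` {2..r+1} \<union> (\<lambda>j. {1,j}) ` {2..r+1} \<union> (\<lambda>j. {j,Suc j}) ` {2..r}"

lemma Eg_Suc: "Eg (Suc r) = Eg r \<union> (\<lambda>u. {r+2,u}) ` {0,1,r+1}"
proof (cases r)
  case 0 then show ?thesis by (auto simp: Eg_def insert_commute)
next
  case (Suc k)
  have a: "{2..Suc r+1} = insert (r+2) {2..r+1}" by auto
  have b: "{2..Suc r} = insert (r+1) {2..r}" using Suc by auto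
  show ?thesis unfolding Eg_def a b by (auto simp: insert_commute)
qed

lemma Eg_sub: "\<forall>e\<in>Eg r. e \<subseteq> {..<r+2}"
  by (auto simp: Eg_def)

lemma Eg_fin: "finite (Eg r)"
  by (simp add: Eg_def)

lemma card_Eg: "r \<ge> 1 \<Longrightarrow> card (Eg r) = 3 * r"
proof (induction r rule: dec_induct)
  case base
  have "Eg 1 = {{0,1},{0,2},{1,2}}" by (auto simp: Eg_def)
  then show ?case by (simp add: doubleton_eq_iff)
next
  case (step r)
  have "card (Eg (Suc r)) = card (Eg r) + card {0,1,r+1::nat}"
    unfolding Eg_Suc
    by (rule edges_add[where V="{..<r+2}"]) (use Eg_sub Eg_fin in auto)
  also have "card {0,1,r+1::nat} = 3" using step by auto
  finally show ?case using step by simp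
qed

lemma cliques_Eg0: "card (cliques {..<2} (Eg 0)) = 4"
proof -
  have c0: "card (cliques ({}::nat set) {}) = 1"
  proof -
    have "cliques ({}::nat set) {} = {{}}" by (auto simp: cliques_def)
    then show ?thesis by simp
  qed
  have "card (cliques (insert (0::nat) {}) (({}::nat set set) \<union> (\<lambda>u. {0::nat,u}) ` {})) = card (cliques ({}::nat set) {}) + 2 ^ card ({}::nat set)"
    by (rule cliques_add) (auto simp: cliques_def)
  then have c1: "card (cliques {0::nat} ({}::nat set set)) = 2" using c0 by simp
  have "card (cliques (insert (1::nat) {0}) (({}::nat set set) \<union> (\<lambda>u. {1::nat,u}) ` {0})) = card (cliques {0::nat} ({}::nat set set)) + 2 ^ card {0::nat}"
    by (rule cliques_add) (auto simp: cliques_def)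
  moreover have "insert 1 {0::nat} = {..<2}" by auto
  moreover have "({}::nat set set) \<union> (\<lambda>u. {1::nat,u}) ` {0} = Eg 0" by (auto simp: Eg_def)
  ultimately show ?thesis using c1 by simp
qed

lemma cliques_Eg: "card (cliques {..<r+2} (Eg r)) = (if r = 0 then 4 else 8 * r)"
proof (induction r)
  case 0 then show ?case using cliques_Eg0 by (simp add: numeral_2_eq_2)
next
  case (Suc r)
  have K: "{0,1,r+1} \<in> cliques {..<r+2} (Eg r)"
  proof (cases r)
    case 0 then show ?thesis by (auto simp: cliques_def Eg_def)
  next
    case (Suc k)
    then show ?thesis by (auto simp: cliques_def Eg_def insert_commute)
  qed
  have "card (cliques (insert (r+2) {..<r+2}) (Eg r \<union> (\<lambda>u. {r+2,u}) ` {0,1,r+1}))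
       = card (cliques {..<r+2} (Eg r)) + 2 ^ card {0,1,r+1::nat}"
    by (rule cliques_add) (use Eg_sub K in auto)
  moreover have "insert (r+2) {..<r+2} = {..<Suc r+2}" by auto
  ultimately have "card (cliques {..<Suc r+2} (Eg (Suc r))) = card (cliques {..<r+2} (Eg r)) + 2 ^ card {0,1,r+1::nat}"
    by (simp add: Eg_Suc)
  then show ?case using Suc.IH by (cases r) auto
qed

lemma cliques_Eg_iso: "card (cliques {..<r+2+s} (Eg r)) = card (cliques {..<r+2} (Eg r)) + s"
proof (induction s)
  case 0 then show ?case by simp
next
  case (Suc s)
  have "card (cliques (insert (r+2+s) {..<r+2+s}) (Eg r \<union> (\<lambda>u. {r+2+s,u}) ` {}))
       = card (cliques {..<r+2+s} (Eg r)) + 2 ^ card ({}::nat set)"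
  proof (rule cliques_add)
    show "\<forall>e\<in>Eg r. e \<subseteq> {..<r+2+s}" using Eg_sub[of r] by fastforce
  qed (auto simp: cliques_def)
  moreover have "insert (r+2+s) {..<r+2+s} = {..<r+2+Suc s}" by auto
  ultimately show ?case using Suc.IH by simp
qed



lemma seg_mem: "z \<in> closed_segment a b \<Longrightarrow> \<exists>u. 0 \<le> u \<and> u \<le> 1 \<and> Re z = (1-u) * Re a + u * Re b \<and> Im z = (1-u) * Im a + u * Im b"
  by (auto simp: in_segment)

lemma L_ab: "z \<in> closed_segment \<i> (-\<i>) \<Longrightarrow> Re z = 0 \<and> -1 \<le> Im z \<and> Im z \<le> 1"
  by (drule seg_mem) auto

lemma L_aP: "z \<in> closed_segment \<i> (of_nat x) \<Longrightarrow> 0 \<le> Im z \<and> Im z \<le> 1 \<and> Re z = real x * (1 - Im z)"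
proof -
  assume "z \<in> closed_segment \<i> (of_nat x)"
  from seg_mem[OF this] obtain u where u: "0 \<le> u" "u \<le> 1" "Re z = u * real x" "Im z = 1 - u" by auto
  then show ?thesis by simp
qed

lemma L_bP: "z \<in> closed_segment (-\<i>) (of_nat x) \<Longrightarrow> -1 \<le> Im z \<and> Im z \<le> 0 \<and> Re z = real x * (1 + Im z)"
proof -
  assume "z \<in> closed_segment (-\<i>) (of_nat x)"
  from seg_mem[OF this] obtain u where u: "0 \<le> u" "u \<le> 1" "Re z = u * real x" "Im z = u - 1" by auto
  then show ?thesis by simp
qed

lemma L_PP: "z \<in> closed_segment (of_nat x) (of_nat (Suc x)) \<Longrightarrow> Im z = 0 \<and> real x \<le> Re z \<and> Re z \<le> real x + 1"
  by (drule seg_mem) (auto simp: algebra_simps)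



definition pos :: "nat \<Rightarrow> nat \<Rightarrow> complex" where
  "pos r k = (if k = 0 then \<i> else if k = 1 then -\<i> else if k \<le> r+1 then of_nat k else - of_nat k)"

lemma pos0[simp]: "pos r 0 = \<i>" and pos1[simp]: "pos r (Suc 0) = -\<i>"
  by (auto simp: pos_def)
lemma posP: "2 \<le> k \<Longrightarrow> k \<le> r+1 \<Longrightarrow> pos r k = of_nat k"
  by (auto simp: pos_def)
lemma posI: "r+1 < k \<Longrightarrow> pos r k = - of_nat k"
  by (auto simp: pos_def)

lemma pos_cases:
  obtains "k = 0" | "k = 1" | "2 \<le> k" "k \<le> r+1" "pos r k = of_nat k" | "r+1 < k" "pos r k = - of_nat k"
proof -
  consider "k = 0" | "k = 1" | "2 \<le> k \<and> k \<le> r+1" | "r+1 < k" by linarith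
  then show ?thesis using that posP posI by metis
qed

lemma Re_pos: "Re (pos r k) = (if k \<le> 1 then 0 else if k \<le> r+1 then real k else - real k)"
  by (simp add: pos_def)
lemma Im_pos: "Im (pos r k) = (if k = 0 then 1 else if k = 1 then -1 else 0)"
  by (simp add: pos_def)

lemma pos_inj: "inj_on (pos r) UNIV"
proof (rule inj_onI)
  fix x y assume h: "pos r x = pos r y"
  then have "Re (pos r x) = Re (pos r y)" "Im (pos r x) = Im (pos r y)" by simp_all
  then show "x = y" unfolding Re_pos Im_pos by (auto split: if_splits)
qed

lemma P_ab_aP: assumes "2 \<le> j" "z \<in> closed_segment \<i> (-\<i>)" "z \<in> closed_segment \<i> (of_nat j)" shows "z = \<i>"
proof -
  have a: "Re z = 0" "Re z = real j * (1 - Im z)" using L_ab[OF assms(2)] L_aP[OF assms(3)] by auto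
  then have "real j * (1 - Im z) = 0" by simp
  then have "Im z = 1" using assms(1) by simp
  then show ?thesis using a(1) by (intro complex_eqI) simp_all
qed

lemma P_ab_bP: assumes "2 \<le> j" "z \<in> closed_segment \<i> (-\<i>)" "z \<in> closed_segment (-\<i>) (of_nat j)" shows "z = -\<i>"
proof -
  have a: "Re z = 0" "Re z = real j * (1 + Im z)" using L_ab[OF assms(2)] L_bP[OF assms(3)] by auto
  then have "real j * (1 + Im z) = 0" by simp
  then have "Im z = -1" using assms(1) by simp
  then show ?thesis using a(1) by (intro complex_eqI) simp_all
qed

lemma P_ab_PP: assumes "2 \<le> j" "z \<in> closed_segment \<i> (-\<i>)" "z \<in> closed_segment (of_nat j) (of_nat (Suc j))" shows False
proof -
  have "Re z = 0" "real j \<le> Re z" using L_ab[OF assms(2)] L_PP[OF assms(3)] by auto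
  then show False using assms(1) by linarith
qed

lemma P_aP_aP: "i \<noteq> j \<Longrightarrow> z \<in> closed_segment \<i> (of_nat i) \<Longrightarrow> z \<in> closed_segment \<i> (of_nat j) \<Longrightarrow> z = \<i>"
proof -
  assume "i \<noteq> j" "z \<in> closed_segment \<i> (of_nat i)" "z \<in> closed_segment \<i> (of_nat j)"
  then have a: "Re z = real i * (1 - Im z)" "Re z = real j * (1 - Im z)" by (auto dest!: L_aP)
  then have "(real i - real j) * (1 - Im z) = 0" by (simp add: algebra_simps)
  then have "Im z = 1" using \<open>i \<noteq> j\<close> by simp
  then have "Re z = 0" using a by simp
  then show "z = \<i>" using \<open>Im z = 1\<close> by (intro complex_eqI) simp_all
qed

lemma P_bP_bP: "i \<noteq> j \<Longrightarrow> z \<in> closed_segment (-\<i>) (of_nat i) \<Longrightarrow> z \<in> closed_segment (-\<i>) (of_nat j) \<Longrightarrow> z = -\<i>"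
proof -
  assume "i \<noteq> j" "z \<in> closed_segment (-\<i>) (of_nat i)" "z \<in> closed_segment (-\<i>) (of_nat j)"
  then have a: "Re z = real i * (1 + Im z)" "Re z = real j * (1 + Im z)" by (auto dest!: L_bP)
  then have "(real i - real j) * (1 + Im z) = 0" by (simp add: algebra_simps)
  then have "Im z = -1" using \<open>i \<noteq> j\<close> by simp
  then have "Re z = 0" using a by simp
  then show "z = -\<i>" using \<open>Im z = -1\<close> by (intro complex_eqI) simp_all
qed

lemma P_aP_bP: "z \<in> closed_segment \<i> (of_nat i) \<Longrightarrow> z \<in> closed_segment (-\<i>) (of_nat j) \<Longrightarrow> z = of_nat i \<and> i = j"
proof -
  assume "z \<in> closed_segment \<i> (of_nat i)" "z \<in> closed_segment (-\<i>) (of_nat j)"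
  then have a: "Re z = real i * (1 - Im z)" "Re z = real j * (1 + Im z)" "Im z = 0" 
    by (auto dest!: L_bP L_aP)
  then have "Re z = real i" "Re z = real j" by simp_all
  then have "z = of_nat i" "i = j" using a(3) by (auto intro: complex_eqI)
  then show ?thesis by blast
qed

lemma P_aP_PP: "z \<in> closed_segment \<i> (of_nat i) \<Longrightarrow> z \<in> closed_segment (of_nat j) (of_nat (Suc j)) \<Longrightarrow> z = of_nat i \<and> (i = j \<or> i = Suc j)"
proof -
  assume h1: "z \<in> closed_segment \<i> (of_nat i)" and h2: "z \<in> closed_segment (of_nat j) (of_nat (Suc j))"
  have a: "Re z = real i * (1 - Im z)" "Im z = 0" "real j \<le> Re z" "Re z \<le> real j + 1"
    using L_PP[OF h2] L_aP[OF h1] by auto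
  then have "Re z = real i" by simp
  then have "z = of_nat i" using a(2) by (intro complex_eqI) simp_all
  moreover have "real j \<le> real i" "real i \<le> real j + 1" using a \<open>Re z = real i\<close> by linarith+
  then have "j \<le> i" "i \<le> Suc j" by linarith+
  ultimately show ?thesis by auto
qed

lemma P_bP_PP: "z \<in> closed_segment (-\<i>) (of_nat i) \<Longrightarrow> z \<in> closed_segment (of_nat j) (of_nat (Suc j)) \<Longrightarrow> z = of_nat i \<and> (i = j \<or> i = Suc j)"
proof -
  assume h1: "z \<in> closed_segment (-\<i>) (of_nat i)" and h2: "z \<in> closed_segment (of_nat j) (of_nat (Suc j))"
  have a: "Re z = real i * (1 + Im z)" "Im z = 0" "real j \<le> Re z" "Re z \<le> real j + 1"
    using L_PP[OF h2] L_bP[OF h1] by auto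
  then have "Re z = real i" by simp
  then have "z = of_nat i" using a(2) by (intro complex_eqI) simp_all
  moreover have "real j \<le> real i" "real i \<le> real j + 1" using a \<open>Re z = real i\<close> by linarith+
  then have "j \<le> i" "i \<le> Suc j" by linarith+
  ultimately show ?thesis by auto
qed

lemma P_PP_PP: "i \<noteq> j \<Longrightarrow> (z::complex) \<in> closed_segment (of_nat i) (of_nat (Suc i)) \<Longrightarrow> z \<in> closed_segment (of_nat j) (of_nat (Suc j))
   \<Longrightarrow> (z = of_nat j \<and> j = Suc i) \<or> (z = of_nat i \<and> i = Suc j)"
proof -
  assume ij: "i \<noteq> j" "z \<in> closed_segment (of_nat i) (of_nat (Suc i))" "z \<in> closed_segment (of_nat j) (of_nat (Suc j))"
  have a: "Im z = 0" "real j \<le> Re z" "Re z \<le> real j + 1" "real i \<le> Re z" "Re z \<le> real i + 1"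
    using L_PP[OF ij(2)] L_PP[OF ij(3)] by auto
  show ?thesis
  proof (cases "i < j")
    case True
    have "real j \<le> real i + 1" using a by linarith
    then have "j \<le> Suc i" by linarith
    then have ji: "j = Suc i" using True by arith
    then have "real j = real i + 1" by simp
    then have "Re z = real j" using a by linarith
    then have "z = of_nat j" using a(1) by (intro complex_eqI) simp_all
    then show ?thesis using ji by blast
  next
    case False
    have "real i \<le> real j + 1" using a by linarith
    then have "i \<le> Suc j" by linarith
    then have ji: "i = Suc j" using False ij(1) by arith
    then have "real i = real j + 1" by simp
    then have "Re z = real i" using a by linarith
    then have "z = of_nat i" using a(1) by (intro complex_eqI) simp_all
    then show ?thesis using ji by blast
  qed
qed

lemma V_ab: "pos r k \<in> closed_segment \<i> (-\<i>) \<Longrightarrow> k = 0 \<or> k = 1"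
  by (cases k rule: pos_cases[where r=r]) (auto dest!: L_ab)

lemma V_aP: assumes that: "pos r k \<in> closed_segment \<i> (of_nat j)" shows "k = 0 \<or> k = j"
proof (cases k rule: pos_cases[where r=r])
  case 2 then show ?thesis using L_aP[OF that] by (auto simp: posP posI)
next
  case 3 then show ?thesis using L_aP[OF that] by (auto simp: posP posI)
next
  case 4 then show ?thesis using L_aP[OF that] by (auto simp: posP posI)
qed simp

lemma V_bP: assumes that: "pos r k \<in> closed_segment (-\<i>) (of_nat j)" shows "k = 1 \<or> k = j"
proof (cases k rule: pos_cases[where r=r])
  case 1 then show ?thesis using L_bP[OF that] by (auto simp: posP posI)
next
  case 3 then show ?thesis using L_bP[OF that] by (auto simp: posP posI)
next
  case 4 then show ?thesis using L_bP[OF that] by (auto simp: posP posI)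
qed simp

lemma V_PP: assumes that: "pos r k \<in> closed_segment (of_nat j) (of_nat (Suc j))" shows "k = j \<or> k = Suc j"
proof (cases k rule: pos_cases[where r=r])
  case 1 then show ?thesis using L_PP[OF that] by (auto simp: posP posI)
next
  case 2 then show ?thesis using L_PP[OF that] by (auto simp: posP posI)
next
  case 3 then show ?thesis using L_PP[OF that] by (auto simp: posP posI)
next
  case 4 then show ?thesis using L_PP[OF that] by (auto simp: posP posI)
qed



definition gam :: "nat \<Rightarrow> nat set \<Rightarrow> real \<Rightarrow> complex" where
  "gam r e = linepath (pos r (Min e)) (pos r (Max e))"

lemma pos1'[simp]: "pos r 1 = -\<i>" by (simp add: pos_def)

lemma gam_uv: "u < v \<Longrightarrow> gam r {u,v} = linepath (pos r u) (pos r v)"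
  by (simp add: gam_def min_def max_def)

lemma img_ab: "path_image (gam r {0,1}) = closed_segment \<i> (-\<i>)"
  by (simp add: gam_uv)
lemma img_aP: "2 \<le> j \<Longrightarrow> j \<le> r+1 \<Longrightarrow> path_image (gam r {0,j}) = closed_segment \<i> (of_nat j)"
  by (simp add: gam_uv posP)
lemma img_bP: "2 \<le> j \<Longrightarrow> j \<le> r+1 \<Longrightarrow> path_image (gam r {1,j}) = closed_segment (-\<i>) (of_nat j)"
  by (simp add: gam_uv posP)
lemma img_PP: "2 \<le> j \<Longrightarrow> j \<le> r \<Longrightarrow> path_image (gam r {j,Suc j}) = closed_segment (of_nat j) (of_nat (Suc j))"
proof -
  assume "2 \<le> j" "j \<le> r"
  then have "gam r {j,Suc j} = linepath (of_nat j) (of_nat (Suc j))"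
    using gam_uv[of j "Suc j" r] posP[of j r] posP[of "Suc j" r] by simp
  then show ?thesis by simp
qed

lemma c00:
  assumes h0: "{0,1} \<noteq> {0,1}" and h1: "z \<in> path_image (gam r {0,1})" and h2: "z \<in> path_image (gam r {0,1})"
  shows "z \<in> pos r ` ({0,1} \<inter> {0,1})"
proof -
  have z1: "z \<in> closed_segment \<i> (-\<i>)" using h1 unfolding img_ab .
  have z2: "z \<in> closed_segment \<i> (-\<i>)" using h2 unfolding img_ab .
  show ?thesis using h0 by simp
qed

lemma c01:
  assumes h0: "2 \<le> j" and h1: "j \<le> r+1" and h2: "{0,1} \<noteq> {0,j}" and h3: "z \<in> path_image (gam r {0,1})" and h4: "z \<in> path_image (gam r {0,j})"
  shows "z \<in> pos r ` ({0,1} \<inter> {0,j})"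
proof -
  have z1: "z \<in> closed_segment \<i> (-\<i>)" using h3 unfolding img_ab .
  have z2: "z \<in> closed_segment \<i> (of_nat j)" using h4 unfolding img_aP[OF h0 h1] .
  have zz: "z = \<i>" using P_ab_aP[OF h0 z1 z2] .
  show ?thesis
  proof (rule image_eqI[where x=0])
    show "z = pos r 0" using zz h0 h1 by (simp add: posP)
    show "0 \<in> {0,1} \<inter> {0,j}" using zz h0 h1 by auto
  qed
qed

lemma c02:
  assumes h0: "2 \<le> j" and h1: "j \<le> r+1" and h2: "{0,1} \<noteq> {1,j}" and h3: "z \<in> path_image (gam r {0,1})" and h4: "z \<in> path_image (gam r {1,j})"
  shows "z \<in> pos r ` ({0,1} \<inter> {1,j})"
proof -
  have z1: "z \<in> closed_segment \<i> (-\<i>)" using h3 unfolding img_ab .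
  have z2: "z \<in> closed_segment (-\<i>) (of_nat j)" using h4 unfolding img_bP[OF h0 h1] .
  have zz: "z = -\<i>" using P_ab_bP[OF h0 z1 z2] .
  show ?thesis
  proof (rule image_eqI[where x=1])
    show "z = pos r 1" using zz h0 h1 by (simp add: posP)
    show "1 \<in> {0,1} \<inter> {1,j}" using zz h0 h1 by auto
  qed
qed

lemma c03:
  assumes h0: "2 \<le> j" and h1: "j \<le> r" and h2: "{0,1} \<noteq> {j,Suc j}" and h3: "z \<in> path_image (gam r {0,1})" and h4: "z \<in> path_image (gam r {j,Suc j})"
  shows "z \<in> pos r ` ({0,1} \<inter> {j,Suc j})"
proof -
  have z1: "z \<in> closed_segment \<i> (-\<i>)" using h3 unfolding img_ab .
  have z2: "z \<in> closed_segment (of_nat j) (of_nat (Suc j))" using h4 unfolding img_PP[OF h0 h1] .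
  show ?thesis using P_ab_PP[OF h0 z1 z2] by simp
qed

lemma c10:
  assumes h0: "2 \<le> i" and h1: "i \<le> r+1" and h2: "{0,i} \<noteq> {0,1}" and h3: "z \<in> path_image (gam r {0,i})" and h4: "z \<in> path_image (gam r {0,1})"
  shows "z \<in> pos r ` ({0,i} \<inter> {0,1})"
proof -
  have z1: "z \<in> closed_segment \<i> (of_nat i)" using h3 unfolding img_aP[OF h0 h1] .
  have z2: "z \<in> closed_segment \<i> (-\<i>)" using h4 unfolding img_ab .
  have zz: "z = \<i>" using P_ab_aP[OF h0 z2 z1] .
  show ?thesis
  proof (rule image_eqI[where x=0])
    show "z = pos r 0" using zz h0 h1 by (simp add: posP)
    show "0 \<in> {0,i} \<inter> {0,1}" using zz h0 h1 by auto
  qed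
qed

lemma c11:
  assumes h0: "2 \<le> i" and h1: "i \<le> r+1" and h2: "2 \<le> j" and h3: "j \<le> r+1" and h4: "{0,i} \<noteq> {0,j}" and h5: "z \<in> path_image (gam r {0,i})" and h6: "z \<in> path_image (gam r {0,j})"
  shows "z \<in> pos r ` ({0,i} \<inter> {0,j})"
proof -
  have z1: "z \<in> closed_segment \<i> (of_nat i)" using h5 unfolding img_aP[OF h0 h1] .
  have z2: "z \<in> closed_segment \<i> (of_nat j)" using h6 unfolding img_aP[OF h2 h3] .
  have "i \<noteq> j" using h4 by auto
  have zz: "z = \<i>" using P_aP_aP[OF \<open>i \<noteq> j\<close> z1 z2] .
  show ?thesis
  proof (rule image_eqI[where x=0])
    show "z = pos r 0" using zz h0 h1 h2 h3 by (simp add: posP)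
    show "0 \<in> {0,i} \<inter> {0,j}" using zz h0 h1 h2 h3 by auto
  qed
qed

lemma c12:
  assumes h0: "2 \<le> i" and h1: "i \<le> r+1" and h2: "2 \<le> j" and h3: "j \<le> r+1" and h4: "{0,i} \<noteq> {1,j}" and h5: "z \<in> path_image (gam r {0,i})" and h6: "z \<in> path_image (gam r {1,j})"
  shows "z \<in> pos r ` ({0,i} \<inter> {1,j})"
proof -
  have z1: "z \<in> closed_segment \<i> (of_nat i)" using h5 unfolding img_aP[OF h0 h1] .
  have z2: "z \<in> closed_segment (-\<i>) (of_nat j)" using h6 unfolding img_bP[OF h2 h3] .
  have zz: "z = of_nat i \<and> i = j" using P_aP_bP[OF z1 z2] .
  show ?thesis
  proof (rule image_eqI[where x=i])
    show "z = pos r i" using zz h0 h1 h2 h3 by (simp add: posP)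
    show "i \<in> {0,i} \<inter> {1,j}" using zz h0 h1 h2 h3 by auto
  qed
qed

lemma c13:
  assumes h0: "2 \<le> i" and h1: "i \<le> r+1" and h2: "2 \<le> j" and h3: "j \<le> r" and h4: "{0,i} \<noteq> {j,Suc j}" and h5: "z \<in> path_image (gam r {0,i})" and h6: "z \<in> path_image (gam r {j,Suc j})"
  shows "z \<in> pos r ` ({0,i} \<inter> {j,Suc j})"
proof -
  have z1: "z \<in> closed_segment \<i> (of_nat i)" using h5 unfolding img_aP[OF h0 h1] .
  have z2: "z \<in> closed_segment (of_nat j) (of_nat (Suc j))" using h6 unfolding img_PP[OF h2 h3] .
  have zz: "z = of_nat i \<and> (i = j \<or> i = Suc j)" using P_aP_PP[OF z1 z2] .
  show ?thesis
  proof (rule image_eqI[where x=i])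
    show "z = pos r i" using zz h0 h1 h2 h3 by (simp add: posP)
    show "i \<in> {0,i} \<inter> {j,Suc j}" using zz h0 h1 h2 h3 by auto
  qed
qed

lemma c20:
  assumes h0: "2 \<le> i" and h1: "i \<le> r+1" and h2: "{1,i} \<noteq> {0,1}" and h3: "z \<in> path_image (gam r {1,i})" and h4: "z \<in> path_image (gam r {0,1})"
  shows "z \<in> pos r ` ({1,i} \<inter> {0,1})"
proof -
  have z1: "z \<in> closed_segment (-\<i>) (of_nat i)" using h3 unfolding img_bP[OF h0 h1] .
  have z2: "z \<in> closed_segment \<i> (-\<i>)" using h4 unfolding img_ab .
  have zz: "z = -\<i>" using P_ab_bP[OF h0 z2 z1] .
  show ?thesis
  proof (rule image_eqI[where x=1])
    show "z = pos r 1" using zz h0 h1 by (simp add: posP)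
    show "1 \<in> {1,i} \<inter> {0,1}" using zz h0 h1 by auto
  qed
qed

lemma c21:
  assumes h0: "2 \<le> i" and h1: "i \<le> r+1" and h2: "2 \<le> j" and h3: "j \<le> r+1" and h4: "{1,i} \<noteq> {0,j}" and h5: "z \<in> path_image (gam r {1,i})" and h6: "z \<in> path_image (gam r {0,j})"
  shows "z \<in> pos r ` ({1,i} \<inter> {0,j})"
proof -
  have z1: "z \<in> closed_segment (-\<i>) (of_nat i)" using h5 unfolding img_bP[OF h0 h1] .
  have z2: "z \<in> closed_segment \<i> (of_nat j)" using h6 unfolding img_aP[OF h2 h3] .
  have zz: "z = of_nat j \<and> j = i" using P_aP_bP[OF z2 z1] .
  show ?thesis
  proof (rule image_eqI[where x=j])
    show "z = pos r j" using zz h0 h1 h2 h3 by (simp add: posP)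
    show "j \<in> {1,i} \<inter> {0,j}" using zz h0 h1 h2 h3 by auto
  qed
qed

lemma c22:
  assumes h0: "2 \<le> i" and h1: "i \<le> r+1" and h2: "2 \<le> j" and h3: "j \<le> r+1" and h4: "{1,i} \<noteq> {1,j}" and h5: "z \<in> path_image (gam r {1,i})" and h6: "z \<in> path_image (gam r {1,j})"
  shows "z \<in> pos r ` ({1,i} \<inter> {1,j})"
proof -
  have z1: "z \<in> closed_segment (-\<i>) (of_nat i)" using h5 unfolding img_bP[OF h0 h1] .
  have z2: "z \<in> closed_segment (-\<i>) (of_nat j)" using h6 unfolding img_bP[OF h2 h3] .
  have "i \<noteq> j" using h4 by auto
  have zz: "z = -\<i>" using P_bP_bP[OF \<open>i \<noteq> j\<close> z1 z2] .
  show ?thesis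
  proof (rule image_eqI[where x=1])
    show "z = pos r 1" using zz h0 h1 h2 h3 by (simp add: posP)
    show "1 \<in> {1,i} \<inter> {1,j}" using zz h0 h1 h2 h3 by auto
  qed
qed

lemma c23:
  assumes h0: "2 \<le> i" and h1: "i \<le> r+1" and h2: "2 \<le> j" and h3: "j \<le> r" and h4: "{1,i} \<noteq> {j,Suc j}" and h5: "z \<in> path_image (gam r {1,i})" and h6: "z \<in> path_image (gam r {j,Suc j})"
  shows "z \<in> pos r ` ({1,i} \<inter> {j,Suc j})"
proof -
  have z1: "z \<in> closed_segment (-\<i>) (of_nat i)" using h5 unfolding img_bP[OF h0 h1] .
  have z2: "z \<in> closed_segment (of_nat j) (of_nat (Suc j))" using h6 unfolding img_PP[OF h2 h3] .
  have zz: "z = of_nat i \<and> (i = j \<or> i = Suc j)" using P_bP_PP[OF z1 z2] .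
  show ?thesis
  proof (rule image_eqI[where x=i])
    show "z = pos r i" using zz h0 h1 h2 h3 by (simp add: posP)
    show "i \<in> {1,i} \<inter> {j,Suc j}" using zz h0 h1 h2 h3 by auto
  qed
qed

lemma c30:
  assumes h0: "2 \<le> i" and h1: "i \<le> r" and h2: "{i,Suc i} \<noteq> {0,1}" and h3: "z \<in> path_image (gam r {i,Suc i})" and h4: "z \<in> path_image (gam r {0,1})"
  shows "z \<in> pos r ` ({i,Suc i} \<inter> {0,1})"
proof -
  have z1: "z \<in> closed_segment (of_nat i) (of_nat (Suc i))" using h3 unfolding img_PP[OF h0 h1] .
  have z2: "z \<in> closed_segment \<i> (-\<i>)" using h4 unfolding img_ab .
  show ?thesis using P_ab_PP[OF h0 z2 z1] by simp
qed

lemma c31: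
  assumes h0: "2 \<le> i" and h1: "i \<le> r" and h2: "2 \<le> j" and h3: "j \<le> r+1" and h4: "{i,Suc i} \<noteq> {0,j}" and h5: "z \<in> path_image (gam r {i,Suc i})" and h6: "z \<in> path_image (gam r {0,j})"
  shows "z \<in> pos r ` ({i,Suc i} \<inter> {0,j})"
proof -
  have z1: "z \<in> closed_segment (of_nat i) (of_nat (Suc i))" using h5 unfolding img_PP[OF h0 h1] .
  have z2: "z \<in> closed_segment \<i> (of_nat j)" using h6 unfolding img_aP[OF h2 h3] .
  have zz: "z = of_nat j \<and> (j = i \<or> j = Suc i)" using P_aP_PP[OF z2 z1] .
  show ?thesis
  proof (rule image_eqI[where x=j])
    show "z = pos r j" using zz h0 h1 h2 h3 by (simp add: posP)
    show "j \<in> {i,Suc i} \<inter> {0,j}" using zz h0 h1 h2 h3 by auto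
  qed
qed

lemma c32:
  assumes h0: "2 \<le> i" and h1: "i \<le> r" and h2: "2 \<le> j" and h3: "j \<le> r+1" and h4: "{i,Suc i} \<noteq> {1,j}" and h5: "z \<in> path_image (gam r {i,Suc i})" and h6: "z \<in> path_image (gam r {1,j})"
  shows "z \<in> pos r ` ({i,Suc i} \<inter> {1,j})"
proof -
  have z1: "z \<in> closed_segment (of_nat i) (of_nat (Suc i))" using h5 unfolding img_PP[OF h0 h1] .
  have z2: "z \<in> closed_segment (-\<i>) (of_nat j)" using h6 unfolding img_bP[OF h2 h3] .
  have zz: "z = of_nat j \<and> (j = i \<or> j = Suc i)" using P_bP_PP[OF z2 z1] .
  show ?thesis
  proof (rule image_eqI[where x=j])
    show "z = pos r j" using zz h0 h1 h2 h3 by (simp add: posP)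
    show "j \<in> {i,Suc i} \<inter> {1,j}" using zz h0 h1 h2 h3 by auto
  qed
qed

lemma c33:
  assumes h0: "2 \<le> i" and h1: "i \<le> r" and h2: "2 \<le> j" and h3: "j \<le> r" and h4: "{i,Suc i} \<noteq> {j,Suc j}" and h5: "z \<in> path_image (gam r {i,Suc i})" and h6: "z \<in> path_image (gam r {j,Suc j})"
  shows "z \<in> pos r ` ({i,Suc i} \<inter> {j,Suc j})"
proof -
  have z1: "z \<in> closed_segment (of_nat i) (of_nat (Suc i))" using h5 unfolding img_PP[OF h0 h1] .
  have z2: "z \<in> closed_segment (of_nat j) (of_nat (Suc j))" using h6 unfolding img_PP[OF h2 h3] .
  have "i \<noteq> j" using h4 by auto
  from P_PP_PP[OF \<open>i \<noteq> j\<close> z1 z2] show ?thesis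
  proof
    assume zz: "z = of_nat j \<and> j = Suc i"
    show ?thesis
    proof (rule image_eqI[where x=j])
      show "z = pos r j" using zz h0 h1 h2 h3 by (simp add: posP)
    qed (use zz in auto)
  next
    assume zz: "z = of_nat i \<and> i = Suc j"
    show ?thesis
    proof (rule image_eqI[where x=i])
      show "z = pos r i" using zz h0 h1 h2 h3 by (simp add: posP)
    qed (use zz in auto)
  qed
qed

lemma Eg_cases:
  assumes "e \<in> Eg r"
  obtains "e = {0,1}" | j where "2 \<le> j" "j \<le> r+1" "e = {0,j}" | j where "2 \<le> j" "j \<le> r+1" "e = {1,j}"
    | j where "2 \<le> j" "j \<le> r" "e = {j, Suc j}"
  using assms unfolding Eg_def by auto

lemma pair_ok:
  assumes he: "e \<in> Eg r" and he': "e' \<in> Eg r" and ne: "e \<noteq> e'"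
  shows "path_image (gam r e) \<inter> path_image (gam r e') \<subseteq> pos r ` (e \<inter> e')"
proof
  fix z assume z: "z \<in> path_image (gam r e) \<inter> path_image (gam r e')"
  show "z \<in> pos r ` (e \<inter> e')"
    using he
  proof (cases rule: Eg_cases)
    case 1 show ?thesis using he'
      by (cases rule: Eg_cases) (metis IntD1 IntD2 z ne 1 c00 c01 c02 c03)+
  next
    case (2 i) show ?thesis using he'
      by (cases rule: Eg_cases) (metis IntD1 IntD2 z ne 2 c10 c11 c12 c13)+
  next
    case (3 i) show ?thesis using he'
      by (cases rule: Eg_cases) (metis IntD1 IntD2 z ne 3 c20 c21 c22 c23)+
  next
    case (4 i) show ?thesis using he'
      by (cases rule: Eg_cases) (metis IntD1 IntD2 z ne 4 c30 c31 c32 c33)+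
  qed
qed

lemma edge_generic:
  assumes uv: "u < v" and V: "u \<in> V" "v \<in> V"
    and only: "\<And>k. pos r k \<in> closed_segment (pos r u) (pos r v) \<Longrightarrow> k = u \<or> k = v"
  shows "arc (gam r {u,v}) \<and> {pathstart (gam r {u,v}), pathfinish (gam r {u,v})} = pos r ` {u,v} \<and>
         path_image (gam r {u,v}) \<inter> pos r ` V = pos r ` {u,v}"
proof -
  have ne: "pos r u \<noteq> pos r v" using uv pos_inj[of r] unfolding inj_on_def by auto
  have "path_image (gam r {u,v}) \<inter> pos r ` V = pos r ` {u,v}"
  proof
    show "path_image (gam r {u,v}) \<inter> pos r ` V \<subseteq> pos r ` {u,v}"
      using only uv by (auto simp: gam_uv)
    show "pos r ` {u,v} \<subseteq> path_image (gam r {u,v}) \<inter> pos r ` V"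
      using V uv by (auto simp: gam_uv)
  qed
  then show ?thesis using ne uv by (simp add: gam_uv)
qed

lemma edge_ok:
  assumes e: "e \<in> Eg r" and n: "r + 2 \<le> n"
  shows "arc (gam r e) \<and> {pathstart (gam r e), pathfinish (gam r e)} = pos r ` e \<and>
         path_image (gam r e) \<inter> pos r ` {..<n} = pos r ` e"
  using e
proof (cases rule: Eg_cases)
  case 1
  show ?thesis unfolding 1
    by (rule edge_generic) (use n V_ab in auto)
next
  case (2 j)
  show ?thesis unfolding 2
    by (rule edge_generic) (use n 2 V_aP[of r _ j] in \<open>auto simp: posP\<close>)
next
  case (3 j)
  show ?thesis unfolding 3
    by (rule edge_generic) (use n 3 V_bP[of r _ j] in \<open>auto simp: posP\<close>)
next
  case (4 j)
  have "pos r (Suc j) = of_nat (Suc j)" using 4 by (intro posP) auto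
  moreover have "pos r j = of_nat j" using 4 by (intro posP) auto
  ultimately show ?thesis unfolding 4
    by (intro edge_generic) (use n 4 V_PP[of r _ j] in auto)
qed

lemma planar_Eg1: assumes n: "r + 2 \<le> n" shows "\<forall>e\<in>Eg r. arc (gam r e) \<and> {pathstart (gam r e), pathfinish (gam r e)} = pos r ` e \<and>
         path_image (gam r e) \<inter> pos r ` {..<n} = pos r ` e"
  by (intro ballI, rule edge_ok[OF _ n])

lemma planar_Eg2: "\<forall>e\<in>Eg r. \<forall>e'\<in>Eg r. e \<noteq> e' \<longrightarrow> path_image (gam r e) \<inter> path_image (gam r e') \<subseteq> pos r ` (e \<inter> e')"
  by (intro ballI impI, rule pair_ok)

lemma planar_Eg: assumes n: "r + 2 \<le> n" shows "planar_graph {..<n} (Eg r)"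
proof -
  have i: "inj_on (pos r) {..<n}" using pos_inj[of r] by (rule inj_on_subset) simp
  have c: "inj_on (pos r) {..<n} \<and> (\<forall>e\<in>Eg r. arc (gam r e) \<and> {pathstart (gam r e), pathfinish (gam r e)} = pos r ` e \<and>
         path_image (gam r e) \<inter> pos r ` {..<n} = pos r ` e) \<and>
     (\<forall>e\<in>Eg r. \<forall>e'\<in>Eg r. e \<noteq> e' \<longrightarrow> path_image (gam r e) \<inter> path_image (gam r e') \<subseteq> pos r ` (e \<inter> e'))"
    using i planar_Eg1[OF n] planar_Eg2[of r] by (intro conjI)
  show ?thesis unfolding planar_graph_def
    apply (rule exI[where x="pos r"])
    apply (rule exI[where x="gam r"])
    apply (rule c)
    done
qed

lemma simple_Eg: assumes n: "r + 2 \<le> n" shows "simple_graph {..<n} (Eg r)"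
  unfolding simple_graph_def
proof (intro conjI ballI)
  fix e assume "e \<in> Eg r"
  then show "\<exists>u v. u \<in> {..<n} \<and> v \<in> {..<n} \<and> u \<noteq> v \<and> e = {u, v}"
  proof (cases rule: Eg_cases)
    case 1 show ?thesis by (rule exI[of _ 0], rule exI[of _ 1]) (use n 1 in auto)
  next
    case (2 j) show ?thesis by (rule exI[of _ 0], rule exI[of _ j]) (use n 2 in auto)
  next
    case (3 j) show ?thesis by (rule exI[of _ 1], rule exI[of _ j]) (use n 3 in auto)
  next
    case (4 j) show ?thesis by (rule exI[of _ j], rule exI[of _ "Suc j"]) (use n 4 in auto)
  qed
qed simp


theorem proposition7:
  fixes n m :: nat
  assumes "n \<ge> 3" and "3 dvd m" and "3 \<le> m" and "m \<le> 3 * n - 6"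
  shows "\<exists>(V :: nat set) (E :: nat set set).
           simple_graph V E \<and> planar_graph V E \<and> card V = n \<and> card E = m \<and>
           real (num_cliques V E) = real n + 7 / 3 * real m - 2"
proof -
  obtain r where m: "m = 3 * r" using assms(2) by (auto elim: dvdE)
  have r1: "r \<ge> 1" using assms(3) m by simp
  have rn: "r + 2 \<le> n" using assms(1,4) m by linarith
  have nn: "{..<n} = {..<r+2+(n-r-2)}" using rn by simp
  have "num_cliques {..<n} (Eg r) = 8 * r + (n - r - 2)"
    unfolding num_cliques_def nn cliques_Eg_iso cliques_Eg using r1 by simp
  then have cl: "real (num_cliques {..<n} (Eg r)) = real n + 7 / 3 * real m - 2"
    using rn m by (simp add: of_nat_diff)
  have "simple_graph {..<n} (Eg r) \<and> planar_graph {..<n} (Eg r) \<and> card {..<n} = n \<and> card (Eg r) = m \<and>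
           real (num_cliques {..<n} (Eg r)) = real n + 7 / 3 * real m - 2"
    using simple_Eg[OF rn] planar_Eg[OF rn] card_Eg[OF r1] m cl by simp
  then show ?thesis by blast
qed

end
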